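(* For each $n \in \{94, 95, 96\}$ there exists a 4-regular matchstick graph with exactly $n$ vertices.
   Context: A matchstick graph is a finite graph drawn in the Euclidean plane such that vertices are distinct points, every edge is a straight line segment of length 1 between its endpoints, and edges do not cross or overlap (two edges intersect at most in a common endpoint). A matchstick graph is 4-regular if every vertex has degree exactly 4. *)

theory Defs
  imports "HOL-Analysis.Analysis"
begin

text \<open>Points of the Euclidean plane are modelled as elements of type complex.
A graph is a vertex set V and an edge set E whose elements are 2-element
subsets of V (simple undirected graph).\<close>

definition matchstick_graph :: "complex set \<Rightarrow> complex set set \<Rightarrow> bool" where
  "matchstick_graph V E \<longleftrightarrow>
     finite V \<and>
     (\<forall>e\<in>E. \<exists>a b. e = {a, b} \<and> a \<in> V \<and> b \<in> V \<and> a \<noteq> b \<and> dist a b = 1) \<and>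
     (\<forall>a b c d. {a, b} \<in> E \<longrightarrow> {c, d} \<in> E \<longrightarrow> {a, b} \<noteq> {c, d} \<longrightarrow>
        closed_segment a b \<inter> closed_segment c d \<subseteq> {a, b} \<inter> {c, d})"

definition degree :: "complex set set \<Rightarrow> complex \<Rightarrow> nat" where
  "degree E v = card {e \<in> E. v \<in> e}"

definition four_regular_matchstick_graph :: "complex set \<Rightarrow> complex set set \<Rightarrow> bool" where
  "four_regular_matchstick_graph V E \<longleftrightarrow>
     matchstick_graph V E \<and> (\<forall>v\<in>V. degree E v = 4)"

end

theory Submission
  imports Defs "HOL-Computational_Algebra.Primes"
begin


type_synonym zq = "int \<times> int"
type_synonym zpt = "zq \<times> zq"

definition zr :: "zq \<Rightarrow> real" where
  "zr x = real_of_int (fst x) + real_of_int (snd x) * sqrt 3"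
definition pt :: "zpt \<Rightarrow> complex" where
  "pt P = Complex (zr (fst P) / 10) (zr (snd P) / 10)"
definition zsub :: "zq \<Rightarrow> zq \<Rightarrow> zq" where
  "zsub x y = (fst x - fst y, snd x - snd y)"
definition zadd :: "zq \<Rightarrow> zq \<Rightarrow> zq" where
  "zadd x y = (fst x + fst y, snd x + snd y)"
definition zmul :: "zq \<Rightarrow> zq \<Rightarrow> zq" where
  "zmul x y = (fst x * fst y + 3 * (snd x * snd y), fst x * snd y + snd x * fst y)"

lemma sqrt3_sq: "sqrt 3 * sqrt (3::real) = 3" by simp

lemma sq3: "sqrt 3 * a * (sqrt 3 * b) = 3 * (a * (b::real))"
proof -
  have "sqrt 3 * a * (sqrt 3 * b) = (sqrt 3 * sqrt 3) * (a*b)" by (simp add: ac_simps)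
  then show ?thesis by simp
qed

lemma zr_sub: "zr (zsub x y) = zr x - zr y"
  by (simp add: zr_def zsub_def algebra_simps)
lemma zr_add: "zr (zadd x y) = zr x + zr y"
  by (simp add: zr_def zadd_def algebra_simps)
lemma zr_mul: "zr (zmul x y) = zr x * zr y"
proof -
  have "zr x * zr y = of_int (fst x) * of_int (fst y) + (of_int (snd x) * of_int (snd y)) * (sqrt 3 * sqrt 3)
     + (of_int (fst x) * of_int (snd y) + of_int (snd x) * of_int (fst y)) * sqrt 3"
    by (simp add: zr_def algebra_simps)
  then show ?thesis by (simp add: zr_def zmul_def algebra_simps)
qed

definition zpos :: "zq \<Rightarrow> bool" where
  "zpos x = (let p = fst x; q = snd x in
     (0 < p \<and> 0 \<le> q) \<or> (0 \<le> p \<and> 0 < q) \<or> (0 < p \<and> q < 0 \<and> 3 * (q * q) < p * p)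
     \<or> (p < 0 \<and> 0 < q \<and> p * p < 3 * (q * q)))"

lemma zpos_sound: assumes "zpos x" shows "0 < zr x"
proof -
  obtain p q where x: "x = (p, q)" by (cases x)
  have s0: "0 < sqrt (3::real)" by simp
  show ?thesis
  proof (cases "0 < p \<and> 0 \<le> q")
    case True then show ?thesis using s0 by (simp add: x zr_def add_pos_nonneg)
  next
    case c1: False
    show ?thesis
    proof (cases "0 \<le> p \<and> 0 < q")
      case True then show ?thesis using s0 by (simp add: x zr_def add_nonneg_pos)
    next
      case c2: False
      show ?thesis
      proof (cases "0 < p \<and> q < 0 \<and> 3 * (q * q) < p * p")
        case True
        hence h: "real_of_int (3 * (q*q)) < real_of_int (p*p)" by linarith
        have "(sqrt 3 * (- real_of_int q))^2 < (real_of_int p)^2"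
          using h by (simp add: power_mult_distrib power2_eq_square sq3)
        hence "sqrt 3 * (- real_of_int q) < real_of_int p"
          by (rule power2_less_imp_less) (use True in simp)
        then show ?thesis by (simp add: x zr_def algebra_simps)
      next
        case c3: False
        with c1 c2 assms have T: "p < 0 \<and> 0 < q \<and> p * p < 3 * (q * q)"
          by (auto simp add: zpos_def x Let_def)
        hence h: "real_of_int (p*p) < real_of_int (3 * (q*q))" by linarith
        have "(- real_of_int p)^2 < (sqrt 3 * real_of_int q)^2"
          using h by (simp add: power_mult_distrib power2_eq_square sq3)
        hence "- real_of_int p < sqrt 3 * real_of_int q"
          by (rule power2_less_imp_less) (use T in simp)
        then show ?thesis by (simp add: x zr_def algebra_simps)
      qed
    qed
  qed
qed

lemma int_sqrt3: fixes a b :: int assumes "a * a = 3 * (b * b)" shows "b = 0"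
  using assms
proof (induction "nat \<bar>b\<bar>" arbitrary: a b rule: less_induct)
  case less
  show ?case
  proof (rule ccontr)
    assume b0: "b \<noteq> 0"
    have p3: "prime (3::int)" by simp
    have "(3::int) dvd a * a" using less.prems by simp
    hence "(3::int) dvd a" using p3 prime_dvd_mult_iff by blast
    then obtain c where a: "a = 3 * c" by (auto elim: dvdE)
    hence bc: "b * b = 3 * (c * c)" using less.prems by simp
    hence "(3::int) dvd b * b" by simp
    hence "(3::int) dvd b" using p3 prime_dvd_mult_iff by blast
    then obtain d where b: "b = 3 * d" by (auto elim: dvdE)
    hence cd: "c * c = 3 * (d * d)" using bc by simp
    have d0: "d \<noteq> 0" using b b0 by simp
    have "nat \<bar>d\<bar> < nat \<bar>b\<bar>" using b d0 by simp
    hence "d = 0" using less.hyps cd by blast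
    then show False using d0 by simp
  qed
qed

lemma zr_zero: assumes "zr x = 0" shows "x = (0, 0)"
proof -
  obtain p q where x: "x = (p, q)" by (cases x)
  have e: "real_of_int p = - (real_of_int q * sqrt 3)" using assms by (simp add: x zr_def; linarith)
  hence "real_of_int p * real_of_int p = real_of_int q * real_of_int q * (sqrt 3 * sqrt 3)" by (simp add: algebra_simps)
  hence "real_of_int (p * p) = real_of_int (3 * (q * q))" by simp
  hence "p * p = 3 * (q * q)" by (simp only: of_int_eq_iff)
  hence "q = 0" by (rule int_sqrt3)
  then show ?thesis using e x by simp
qed

lemma zr_inj: assumes "zr x = zr y" shows "x = y"
proof -
  have "zr (zsub x y) = 0" using assms by (simp add: zr_sub)
  hence "zsub x y = (0,0)" by (rule zr_zero)
  then show ?thesis by (cases x, cases y, simp add: zsub_def)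
qed

lemma pt_inj: assumes "pt P = pt Q" shows "P = Q"
proof -
  have "zr (fst P) = zr (fst Q)" "zr (snd P) = zr (snd Q)" using assms by (simp_all add: pt_def)
  hence "fst P = fst Q" "snd P = snd Q" using zr_inj by blast+
  then show ?thesis by (simp add: prod_eq_iff)
qed

definition unit_ok :: "zpt \<Rightarrow> zpt \<Rightarrow> bool" where
  "unit_ok P Q = (let dx = zsub (fst P) (fst Q); dy = zsub (snd P) (snd Q) in
      zadd (zmul dx dx) (zmul dy dy) = (100, 0))"

lemma unit_ok_dist: assumes "unit_ok P Q" shows "dist (pt P) (pt Q) = 1"
proof -
  define dx where "dx = zsub (fst P) (fst Q)"
  define dy where "dy = zsub (snd P) (snd Q)"
  have "zr (zadd (zmul dx dx) (zmul dy dy)) = 100" using assms by (simp add: unit_ok_def dx_def dy_def Let_def zr_def)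
  hence h: "zr dx * zr dx + zr dy * zr dy = 100" by (simp add: zr_add zr_mul)
  have "pt P - pt Q = Complex (zr dx / 10) (zr dy / 10)"
    by (simp add: pt_def dx_def dy_def zr_sub complex_eq_iff diff_divide_distrib)
  hence "dist (pt P) (pt Q) = sqrt ((zr dx / 10)^2 + (zr dy / 10)^2)" by (simp add: dist_norm complex_norm)
  also have "(zr dx / 10)^2 + (zr dy / 10)^2 = 1" using h by (simp add: power2_eq_square field_simps)
  finally show ?thesis by simp
qed


definition zlo :: "zq \<Rightarrow> int" where
  "zlo x = 1000 * fst x + (if 0 \<le> snd x then 1732 * snd x else 1733 * snd x)"
definition zhi :: "zq \<Rightarrow> int" where
  "zhi x = 1000 * fst x + (if 0 \<le> snd x then 1733 * snd x else 1732 * snd x)"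

lemma sqrt3_lo: "1.732 \<le> sqrt (3::real)"
  by (rule real_le_rsqrt) (simp add: power2_eq_square)
lemma sqrt3_hi: "sqrt (3::real) \<le> 1.733"
proof -
  have "sqrt (3::real) \<le> sqrt (1.733^2)" by (rule real_sqrt_le_mono) (simp add: power2_eq_square)
  then show ?thesis by simp
qed

lemma zlo_le: "real_of_int (zlo x) \<le> 1000 * zr x"
proof (cases "0 \<le> snd x")
  case True
  have "real_of_int (snd x) * 1.732 \<le> real_of_int (snd x) * sqrt 3"
    using True sqrt3_lo by (intro mult_left_mono) auto
  then show ?thesis using True by (simp add: zlo_def zr_def algebra_simps)
next
  case False
  have "real_of_int (snd x) * 1.733 \<le> real_of_int (snd x) * sqrt 3"
    using False sqrt3_hi by (intro mult_left_mono_neg) auto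
  then show ?thesis using False by (simp add: zlo_def zr_def algebra_simps)
qed

lemma zhi_ge: "1000 * zr x \<le> real_of_int (zhi x)"
proof (cases "0 \<le> snd x")
  case True
  have "real_of_int (snd x) * sqrt 3 \<le> real_of_int (snd x) * 1.733"
    using True sqrt3_hi by (intro mult_left_mono) auto
  then show ?thesis using True by (simp add: zhi_def zr_def algebra_simps)
next
  case False
  have "real_of_int (snd x) * sqrt 3 \<le> real_of_int (snd x) * 1.732"
    using False sqrt3_lo by (intro mult_left_mono_neg) auto
  then show ?thesis using False by (simp add: zhi_def zr_def algebra_simps)
qed

lemma conv_le: fixes x y s u :: real
  assumes "x \<le> s" "y \<le> s" "0 \<le> u" "u \<le> 1" shows "(1 - u) * x + u * y \<le> s"
proof -
  have "(1-u) * x \<le> (1-u) * s" using assms by (intro mult_left_mono) auto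
  moreover have "u * y \<le> u * s" using assms by (intro mult_left_mono) auto
  ultimately show ?thesis by (simp add: algebra_simps)
qed

lemma conv_ge: fixes x y s u :: real
  assumes "s \<le> x" "s \<le> y" "0 \<le> u" "u \<le> 1" shows "s \<le> (1 - u) * x + u * y"
proof -
  have "(1-u) * s \<le> (1-u) * x" using assms by (intro mult_left_mono) auto
  moreover have "u * s \<le> u * y" using assms by (intro mult_left_mono) auto
  ultimately show ?thesis by (simp add: algebra_simps)
qed

lemma lin_f: "al * Re ((1 - u) *\<^sub>R x + u *\<^sub>R y) + be * Im ((1 - u) *\<^sub>R x + u *\<^sub>R y)
   = (1 - u) * (al * Re x + be * Im x) + u * (al * Re y + be * Im y)"
  by (simp add: algebra_simps)

lemma seg_sep:
  fixes a b c d :: complex and al be s t :: real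
  assumes "al * Re a + be * Im a \<le> s" "al * Re b + be * Im b \<le> s" "s < t"
    "t \<le> al * Re c + be * Im c" "t \<le> al * Re d + be * Im d"
  shows "closed_segment a b \<inter> closed_segment c d = {}"
proof (rule ccontr)
  assume "closed_segment a b \<inter> closed_segment c d \<noteq> {}"
  then obtain z where z1: "z \<in> closed_segment a b" and z2: "z \<in> closed_segment c d" by blast
  from z1 obtain u where u: "z = (1 - u) *\<^sub>R a + u *\<^sub>R b" "0 \<le> u" "u \<le> 1"
    unfolding closed_segment_def by blast
  from z2 obtain v where v: "z = (1 - v) *\<^sub>R c + v *\<^sub>R d" "0 \<le> v" "v \<le> 1"
    unfolding closed_segment_def by blast
  have "al * Re z + be * Im z \<le> s" using u assms(1,2) by (simp only: lin_f) (rule conv_le)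
  moreover have "t \<le> al * Re z + be * Im z" using v assms(4,5) by (simp only: lin_f) (rule conv_ge)
  ultimately show False using assms(3) by simp
qed

lemma seg_shared:
  fixes a b d :: complex
  assumes "dist a b = 1" "dist a d = 1" "b \<noteq> d"
  shows "closed_segment a b \<inter> closed_segment a d \<subseteq> {a}"
proof
  fix z assume "z \<in> closed_segment a b \<inter> closed_segment a d"
  then obtain u v where u: "z = (1 - u) *\<^sub>R a + u *\<^sub>R b" "0 \<le> u" "u \<le> 1"
    and v: "z = (1 - v) *\<^sub>R a + v *\<^sub>R d" "0 \<le> v" "v \<le> 1"
    unfolding closed_segment_def by blast
  have zu: "z - a = u *\<^sub>R (b - a)" using u(1) by (simp add: algebra_simps)
  have zv: "z - a = v *\<^sub>R (d - a)" using v(1) by (simp add: algebra_simps)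
  have nb: "norm (b - a) = 1" using assms(1) by (simp add: dist_norm norm_minus_commute)
  have nd: "norm (d - a) = 1" using assms(2) by (simp add: dist_norm norm_minus_commute)
  have "norm (z - a) = u" using zu nb u(2) by simp
  moreover have "norm (z - a) = v" using zv nd v(2) by simp
  ultimately have uv: "u = v" by simp
  show "z \<in> {a}"
  proof (cases "u = 0")
    case True then show ?thesis using u(1) by simp
  next
    case False
    have "u *\<^sub>R (b - a) = u *\<^sub>R (d - a)" using zu zv uv by auto
    hence "b - a = d - a" using False by simp
    hence "b = d" by simp
    then show ?thesis using assms(3) by simp
  qed
qed


definition zlt :: "zpt \<Rightarrow> zpt \<Rightarrow> bool" where
  "zlt P Q = (fst (fst P) < fst (fst Q) \<or> fst (fst P) = fst (fst Q) \<and>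
     (snd (fst P) < snd (fst Q) \<or> snd (fst P) = snd (fst Q) \<and>
     (fst (snd P) < fst (snd Q) \<or> fst (snd P) = fst (snd Q) \<and> snd (snd P) < snd (snd Q))))"

lemma zlt_irrefl: "\<not> zlt P P" by (simp add: zlt_def)
lemma zlt_trans: "zlt P Q \<Longrightarrow> zlt Q R \<Longrightarrow> zlt P R"
  unfolding zlt_def by (cases P, cases Q, cases R) auto

definition elt :: "zpt \<times> zpt \<Rightarrow> zpt \<times> zpt \<Rightarrow> bool" where
  "elt e f = (zlt (fst e) (fst f) \<or> fst e = fst f \<and> zlt (snd e) (snd f))"

lemma elt_irrefl: "\<not> elt e e" by (simp add: elt_def zlt_irrefl)
lemma elt_trans: assumes "elt e f" "elt f g" shows "elt e g"
proof -
  have A: "zlt (fst e) (fst f) \<or> fst e = fst f \<and> zlt (snd e) (snd f)" using assms(1) by (simp add: elt_def)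
  have B: "zlt (fst f) (fst g) \<or> fst f = fst g \<and> zlt (snd f) (snd g)" using assms(2) by (simp add: elt_def)
  show ?thesis
  proof (cases "zlt (fst e) (fst f)")
    case True
    show ?thesis
    proof (cases "zlt (fst f) (fst g)")
      case True2: True
      show ?thesis using zlt_trans[OF True True2] by (simp add: elt_def)
    next
      case False
      hence "fst f = fst g" using B by simp
      then show ?thesis using True by (simp add: elt_def)
    qed
  next
    case False
    hence ef: "fst e = fst f" "zlt (snd e) (snd f)" using A by simp_all
    show ?thesis
    proof (cases "zlt (fst f) (fst g)")
      case True
      then show ?thesis using ef by (simp add: elt_def)
    next
      case False2: False
      hence "fst f = fst g" "zlt (snd f) (snd g)" using B by simp_all
      then show ?thesis using ef zlt_trans by (simp add: elt_def)
    qed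
  qed
qed

fun chain :: "('a \<Rightarrow> 'a \<Rightarrow> bool) \<Rightarrow> 'a list \<Rightarrow> bool" where
  "chain R (x # y # zs) = (R x y \<and> chain R (y # zs))"
| "chain R _ = True"

lemma chain_all:
  assumes tr: "\<And>x y z. R x y \<Longrightarrow> R y z \<Longrightarrow> R x z"
  shows "chain R (x # xs) \<Longrightarrow> \<forall>y\<in>set xs. R x y"
proof (induction xs arbitrary: x)
  case Nil then show ?case by simp
next
  case (Cons a xs)
  hence "R x a" "chain R (a # xs)" by simp_all
  hence "\<forall>y\<in>set xs. R a y" using Cons.IH by simp
  then show ?case using \<open>R x a\<close> by (auto intro: tr[of x a])
qed

lemma chain_distinct:
  assumes tr: "\<And>x y z. R x y \<Longrightarrow> R y z \<Longrightarrow> R x z" and irr: "\<And>x. \<not> R x x"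
  shows "chain R xs \<Longrightarrow> distinct xs"
proof (induction xs)
  case Nil then show ?case by simp
next
  case (Cons a xs)
  have "chain R xs" using Cons.prems by (cases xs) simp_all
  moreover have "\<forall>y\<in>set xs. R a y" using chain_all[of R a xs, OF tr] Cons.prems by simp
  ultimately show ?case using Cons.IH irr by auto
qed

definition xl :: "zpt \<times> zpt \<Rightarrow> int" where "xl e = min (zlo (fst (fst e))) (zlo (fst (snd e)))"
definition xh :: "zpt \<times> zpt \<Rightarrow> int" where "xh e = max (zhi (fst (fst e))) (zhi (fst (snd e)))"
definition yl :: "zpt \<times> zpt \<Rightarrow> int" where "yl e = min (zlo (snd (fst e))) (zlo (snd (snd e)))"
definition yh :: "zpt \<times> zpt \<Rightarrow> int" where "yh e = max (zhi (snd (fst e))) (zhi (snd (snd e)))"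

definition box_sep :: "zpt \<times> zpt \<Rightarrow> zpt \<times> zpt \<Rightarrow> bool" where
  "box_sep e f = (xh e < xl f \<or> xh f < xl e \<or> yh e < yl f \<or> yh f < yl e)"

lemma Re_pt: "Re (pt P) = zr (fst P) / 10" by (simp add: pt_def)
lemma Im_pt: "Im (pt P) = zr (snd P) / 10" by (simp add: pt_def)

definition seg :: "zpt \<times> zpt \<Rightarrow> complex set" where
  "seg e = closed_segment (pt (fst e)) (pt (snd e))"

lemma xb: "real_of_int (xl g) \<le> 10000 * Re (pt (fst g))" "real_of_int (xl g) \<le> 10000 * Re (pt (snd g))"
  "10000 * Re (pt (fst g)) \<le> real_of_int (xh g)" "10000 * Re (pt (snd g)) \<le> real_of_int (xh g)"
proof -
  have a: "real_of_int (xl g) \<le> real_of_int (zlo (fst (fst g)))" "real_of_int (xl g) \<le> real_of_int (zlo (fst (snd g)))"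
    "real_of_int (zhi (fst (fst g))) \<le> real_of_int (xh g)" "real_of_int (zhi (fst (snd g))) \<le> real_of_int (xh g)"
    unfolding xl_def xh_def of_int_le_iff by simp_all
  have b: "10000 * Re (pt P) = 1000 * zr (fst P)" for P by (simp add: Re_pt)
  show "real_of_int (xl g) \<le> 10000 * Re (pt (fst g))" using a(1) zlo_le[of "fst (fst g)"] b[of "fst g"] by linarith
  show "real_of_int (xl g) \<le> 10000 * Re (pt (snd g))" using a(2) zlo_le[of "fst (snd g)"] b[of "snd g"] by linarith
  show "10000 * Re (pt (fst g)) \<le> real_of_int (xh g)" using a(3) zhi_ge[of "fst (fst g)"] b[of "fst g"] by linarith
  show "10000 * Re (pt (snd g)) \<le> real_of_int (xh g)" using a(4) zhi_ge[of "fst (snd g)"] b[of "snd g"] by linarith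
qed

lemma yb: "real_of_int (yl g) \<le> 10000 * Im (pt (fst g))" "real_of_int (yl g) \<le> 10000 * Im (pt (snd g))"
  "10000 * Im (pt (fst g)) \<le> real_of_int (yh g)" "10000 * Im (pt (snd g)) \<le> real_of_int (yh g)"
proof -
  have a: "real_of_int (yl g) \<le> real_of_int (zlo (snd (fst g)))" "real_of_int (yl g) \<le> real_of_int (zlo (snd (snd g)))"
    "real_of_int (zhi (snd (fst g))) \<le> real_of_int (yh g)" "real_of_int (zhi (snd (snd g))) \<le> real_of_int (yh g)"
    unfolding yl_def yh_def of_int_le_iff by simp_all
  have b: "10000 * Im (pt P) = 1000 * zr (snd P)" for P by (simp add: Im_pt)
  show "real_of_int (yl g) \<le> 10000 * Im (pt (fst g))" using a(1) zlo_le[of "snd (fst g)"] b[of "fst g"] by linarith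
  show "real_of_int (yl g) \<le> 10000 * Im (pt (snd g))" using a(2) zlo_le[of "snd (snd g)"] b[of "snd g"] by linarith
  show "10000 * Im (pt (fst g)) \<le> real_of_int (yh g)" using a(3) zhi_ge[of "snd (fst g)"] b[of "fst g"] by linarith
  show "10000 * Im (pt (snd g)) \<le> real_of_int (yh g)" using a(4) zhi_ge[of "snd (snd g)"] b[of "snd g"] by linarith
qed

lemma box_sep_sound: assumes "box_sep e f" shows "seg e \<inter> seg f = {}"
proof -
  consider "xh e < xl f" | "xh f < xl e" | "yh e < yl f" | "yh f < yl e" using assms box_sep_def by blast
  then show ?thesis
  proof cases
    case 1
    hence st: "real_of_int (xh e) < real_of_int (xl f)" by simp
    show ?thesis unfolding seg_def
      by (rule seg_sep[where al=10000 and be=0 and s="real_of_int (xh e)" and t="real_of_int (xl f)"])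
         (use xb[of e] xb[of f] st in simp_all)
  next
    case 2
    hence st: "- real_of_int (xl e) < - real_of_int (xh f)" by simp
    show ?thesis unfolding seg_def
      by (rule seg_sep[where al="-10000" and be=0 and s="- real_of_int (xl e)" and t="- real_of_int (xh f)"])
         (use xb[of e] xb[of f] st in simp_all)
  next
    case 3
    hence st: "real_of_int (yh e) < real_of_int (yl f)" by simp
    show ?thesis unfolding seg_def
      by (rule seg_sep[where al=0 and be=10000 and s="real_of_int (yh e)" and t="real_of_int (yl f)"])
         (use yb[of e] yb[of f] st in simp_all)
  next
    case 4
    hence st: "- real_of_int (yl e) < - real_of_int (yh f)" by simp
    show ?thesis unfolding seg_def
      by (rule seg_sep[where al=0 and be="-10000" and s="- real_of_int (yl e)" and t="- real_of_int (yh f)"])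
         (use yb[of e] yb[of f] st in simp_all)
  qed
qed


definition dotz :: "zpt \<Rightarrow> zpt \<Rightarrow> zq" where
  "dotz w X = zadd (zmul (fst w) (fst X)) (zmul (snd w) (snd X))"

lemma dotz_real: "zr (dotz w X) = 10 * (zr (fst w) * Re (pt X) + zr (snd w) * Im (pt X))"
  by (simp add: dotz_def zr_add zr_mul Re_pt Im_pt)

definition wlt :: "zpt \<Rightarrow> zpt \<Rightarrow> zpt \<Rightarrow> bool" where
  "wlt w X Y = zpos (zsub (dotz w Y) (dotz w X))"

lemma wlt_sound: assumes "wlt w X Y"
  shows "zr (fst w) * Re (pt X) + zr (snd w) * Im (pt X) < zr (fst w) * Re (pt Y) + zr (snd w) * Im (pt Y)"
proof -
  have "0 < zr (zsub (dotz w Y) (dotz w X))" using assms zpos_sound by (simp add: wlt_def)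
  then show ?thesis by (simp add: zr_sub dotz_real)
qed

definition sat1 :: "zpt \<Rightarrow> zpt \<times> zpt \<Rightarrow> zpt \<times> zpt \<Rightarrow> bool" where
  "sat1 w e f = (wlt w (fst e) (fst f) \<and> wlt w (fst e) (snd f) \<and> wlt w (snd e) (fst f) \<and> wlt w (snd e) (snd f))"

lemma sat1_sound: assumes "sat1 w e f" shows "seg e \<inter> seg f = {}"
proof -
  define F where "F = (\<lambda>z. zr (fst w) * Re z + zr (snd w) * Im z)"
  have h: "F (pt (fst e)) < F (pt (fst f))" "F (pt (fst e)) < F (pt (snd f))"
     "F (pt (snd e)) < F (pt (fst f))" "F (pt (snd e)) < F (pt (snd f))"
    using assms wlt_sound unfolding sat1_def F_def by blast+
  show ?thesis unfolding seg_def
    by (rule seg_sep[where al="zr (fst w)" and be="zr (snd w)" and s="max (F (pt (fst e))) (F (pt (snd e)))"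
        and t="min (F (pt (fst f))) (F (pt (snd f)))"])
       (use h in \<open>simp_all add: F_def\<close>)
qed

definition sat :: "zpt \<Rightarrow> zpt \<times> zpt \<Rightarrow> zpt \<times> zpt \<Rightarrow> bool" where
  "sat w e f = (sat1 w e f \<or> sat1 w f e)"

lemma sat_sound: assumes "sat w e f" shows "seg e \<inter> seg f = {}"
  using assms sat1_sound unfolding sat_def by blast

definition perp :: "zpt \<times> zpt \<Rightarrow> zpt" where
  "perp e = (zsub (snd (fst e)) (snd (snd e)), zsub (fst (snd e)) (fst (fst e)))"
definition dirv :: "zpt \<times> zpt \<Rightarrow> zpt" where
  "dirv e = (zsub (fst (snd e)) (fst (fst e)), zsub (snd (snd e)) (snd (fst e)))"

definition share :: "zpt \<times> zpt \<Rightarrow> zpt \<times> zpt \<Rightarrow> bool" where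
  "share e f = (fst e = fst f \<or> fst e = snd f \<or> snd e = fst f \<or> snd e = snd f)"

definition pair_ok :: "zpt \<times> zpt \<Rightarrow> zpt \<times> zpt \<Rightarrow> bool" where
  "pair_ok e f = (if share e f then True else if box_sep e f then True
     else if sat (perp e) e f then True else if sat (perp f) e f then True else sat (dirv e) e f)"

fun allp :: "(zpt \<times> zpt) list \<Rightarrow> bool" where
  "allp [] = True"
| "allp (x # xs) = (list_all (pair_ok x) xs \<and> allp xs)"

lemma allp_sound: "allp xs \<Longrightarrow> x \<in> set xs \<Longrightarrow> y \<in> set xs \<Longrightarrow> x \<noteq> y \<Longrightarrow> pair_ok x y \<or> pair_ok y x"
proof (induction xs)
  case Nil then show ?case by simp
next
  case (Cons a xs)
  then show ?case by (auto simp: list_all_iff)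
qed

definition eok :: "zpt list \<Rightarrow> zpt \<times> zpt \<Rightarrow> bool" where
  "eok vs e = (zlt (fst e) (snd e) \<and> unit_ok (fst e) (snd e) \<and> fst e \<in> set vs \<and> snd e \<in> set vs)"

definition check :: "zpt list \<Rightarrow> (zpt \<times> zpt) list \<Rightarrow> bool" where
  "check vs es = (chain zlt vs \<and> chain elt es \<and> list_all (eok vs) es \<and>
     list_all (\<lambda>X. length (filter (\<lambda>e. fst e = X \<or> snd e = X) es) = 4) vs \<and> allp es)"

definition edg :: "zpt \<times> zpt \<Rightarrow> complex set" where
  "edg e = {pt (fst e), pt (snd e)}"

lemma pair_sound:
  assumes "eok vs e" "eok vs f" "e \<noteq> f" "pair_ok e f"
  shows "seg e \<inter> seg f \<subseteq> edg e \<inter> edg f"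
proof -
  obtain P Q where e: "e = (P, Q)" by (cases e)
  obtain P' Q' where f: "f = (P', Q')" by (cases f)
  have lt: "zlt P Q" "zlt P' Q'" using assms(1,2) by (simp_all add: eok_def e f)
  have un: "dist (pt P) (pt Q) = 1" "dist (pt P') (pt Q') = 1"
    using assms(1,2) unit_ok_dist by (simp_all add: eok_def e f)
  have ne: "(P, Q) \<noteq> (P', Q')" using assms(3) e f by simp
  show ?thesis
  proof (cases "share e f")
    case True
    then consider "P = P'" | "P = Q'" | "Q = P'" | "Q = Q'" by (auto simp: share_def e f)
    then show ?thesis
    proof cases
      case 1
      hence "Q \<noteq> Q'" using ne by simp
      hence "pt Q \<noteq> pt Q'" using pt_inj by blast
      hence "closed_segment (pt P) (pt Q) \<inter> closed_segment (pt P) (pt Q') \<subseteq> {pt P}"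
        using un 1 by (intro seg_shared) simp_all
      then show ?thesis using 1 by (auto simp: seg_def edg_def e f)
    next
      case 2
      have "Q \<noteq> P'" using lt 2 zlt_trans zlt_irrefl by blast
      hence "pt Q \<noteq> pt P'" using pt_inj by blast
      moreover have "dist (pt P) (pt P') = 1" using un 2 by (simp add: dist_commute)
      ultimately have "closed_segment (pt P) (pt Q) \<inter> closed_segment (pt P) (pt P') \<subseteq> {pt P}"
        using un by (intro seg_shared) simp_all
      then show ?thesis using 2 by (auto simp: seg_def edg_def e f closed_segment_commute)
    next
      case 3
      have "P \<noteq> Q'" using lt 3 zlt_trans zlt_irrefl by blast
      hence "pt P \<noteq> pt Q'" using pt_inj by blast
      moreover have "dist (pt Q) (pt P) = 1" using un by (simp add: dist_commute)
      moreover have "dist (pt Q) (pt Q') = 1" using un 3 by simp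
      ultimately have "closed_segment (pt Q) (pt P) \<inter> closed_segment (pt Q) (pt Q') \<subseteq> {pt Q}"
        by (intro seg_shared) simp_all
      then show ?thesis using 3 by (auto simp: seg_def edg_def e f closed_segment_commute)
    next
      case 4
      hence "P \<noteq> P'" using ne by simp
      hence "pt P \<noteq> pt P'" using pt_inj by blast
      moreover have "dist (pt Q) (pt P) = 1" using un by (simp add: dist_commute)
      moreover have "dist (pt Q) (pt P') = 1" using un 4 by (simp add: dist_commute)
      ultimately have "closed_segment (pt Q) (pt P) \<inter> closed_segment (pt Q) (pt P') \<subseteq> {pt Q}"
        by (intro seg_shared) simp_all
      then show ?thesis using 4 by (auto simp: seg_def edg_def e f closed_segment_commute)
    qed
  next
    case False
    hence "box_sep e f \<or> sat (perp e) e f \<or> sat (perp f) e f \<or> sat (dirv e) e f"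
      using assms(4) unfolding pair_ok_def by (auto split: if_splits)
    hence "seg e \<inter> seg f = {}" using box_sep_sound sat_sound by blast
    then show ?thesis by simp
  qed
qed


lemma check_sound:
  assumes "check vs es"
  shows "four_regular_matchstick_graph (pt ` set vs) (edg ` set es) \<and> card (pt ` set vs) = length vs"
proof -
  have c1: "chain zlt vs" and c2: "chain elt es" and c3: "\<forall>e\<in>set es. eok vs e"
    and c4: "\<forall>X\<in>set vs. length (filter (\<lambda>e. fst e = X \<or> snd e = X) es) = 4" and c5: "allp es"
    using assms by (simp_all add: check_def list_all_iff)
  have dvs: "distinct vs" using chain_distinct[of zlt vs] zlt_trans zlt_irrefl c1 by blast
  have des: "distinct es" using chain_distinct[of elt es] elt_trans elt_irrefl c2 by blast
  have injpt: "inj_on pt A" for A using pt_inj by (auto intro: inj_onI)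
  have cardV: "card (pt ` set vs) = length vs"
    using card_image[OF injpt] distinct_card[OF dvs] by simp
  have injE: "inj_on edg (set es)"
  proof (rule inj_onI)
    fix e f assume ef: "e \<in> set es" "f \<in> set es" "edg e = edg f"
    have lt: "zlt (fst e) (snd e)" "zlt (fst f) (snd f)" using ef c3 by (auto simp: eok_def)
    from ef(3) have "pt (fst e) = pt (fst f) \<and> pt (snd e) = pt (snd f) \<or> pt (fst e) = pt (snd f) \<and> pt (snd e) = pt (fst f)"
      by (auto simp: edg_def doubleton_eq_iff)
    hence "fst e = fst f \<and> snd e = snd f \<or> fst e = snd f \<and> snd e = fst f" using pt_inj by blast
    moreover have "\<not> (fst e = snd f \<and> snd e = fst f)"
    proof
      assume a: "fst e = snd f \<and> snd e = fst f"
      hence "zlt (snd f) (fst f)" using lt(1) by simp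
      hence "zlt (snd f) (snd f)" using lt(2) zlt_trans by blast
      thus False using zlt_irrefl by blast
    qed
    ultimately have "fst e = fst f \<and> snd e = snd f" by blast
    then show "e = f" by (metis prod.collapse)
  qed
  have edges: "\<forall>e\<in>edg ` set es. \<exists>a b. e = {a, b} \<and> a \<in> pt ` set vs \<and> b \<in> pt ` set vs \<and> a \<noteq> b \<and> dist a b = 1"
  proof
    fix E assume "E \<in> edg ` set es"
    then obtain e where e: "e \<in> set es" "E = edg e" by blast
    have ok: "eok vs e" using c3 e by blast
    have "zlt (fst e) (snd e)" using ok by (simp add: eok_def)
    hence "fst e \<noteq> snd e" using zlt_irrefl by metis
    hence "pt (fst e) \<noteq> pt (snd e)" using pt_inj by blast
    moreover have "dist (pt (fst e)) (pt (snd e)) = 1" using ok unit_ok_dist by (simp add: eok_def)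
    moreover have "pt (fst e) \<in> pt ` set vs" "pt (snd e) \<in> pt ` set vs" using ok by (auto simp: eok_def)
    ultimately show "\<exists>a b. E = {a, b} \<and> a \<in> pt ` set vs \<and> b \<in> pt ` set vs \<and> a \<noteq> b \<and> dist a b = 1"
      using e by (auto simp: edg_def)
  qed
  have cross: "\<forall>a b c d. {a, b} \<in> edg ` set es \<longrightarrow> {c, d} \<in> edg ` set es \<longrightarrow> {a, b} \<noteq> {c, d} \<longrightarrow>
        closed_segment a b \<inter> closed_segment c d \<subseteq> {a, b} \<inter> {c, d}"
  proof (intro allI impI)
    fix a b c d
    assume ab: "{a, b} \<in> edg ` set es" and cd: "{c, d} \<in> edg ` set es" and ne: "{a, b} \<noteq> {c, d}"
    obtain e where e: "e \<in> set es" "{a, b} = edg e" using ab by blast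
    obtain f where f: "f \<in> set es" "{c, d} = edg f" using cd by blast
    have ef: "e \<noteq> f" using e f ne by auto
    have s1: "closed_segment a b = seg e"
      using e(2) unfolding edg_def seg_def doubleton_eq_iff by (auto simp: closed_segment_commute)
    have s2: "closed_segment c d = seg f"
      using f(2) unfolding edg_def seg_def doubleton_eq_iff by (auto simp: closed_segment_commute)
    have oke: "eok vs e" "eok vs f" using c3 e f by blast+
    from allp_sound[OF c5 e(1) f(1) ef] consider "pair_ok e f" | "pair_ok f e" by blast
    then have "seg e \<inter> seg f \<subseteq> edg e \<inter> edg f"
    proof cases
      case 1 then show ?thesis using pair_sound[OF oke(1) oke(2) ef] by blast
    next
      case 2 then show ?thesis using pair_sound[OF oke(2) oke(1)] ef by blast
    qed
    then show "closed_segment a b \<inter> closed_segment c d \<subseteq> {a, b} \<inter> {c, d}"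
      using s1 s2 e(2) f(2) by simp
  qed
  have degs: "\<forall>v\<in>pt ` set vs. degree (edg ` set es) v = 4"
  proof
    fix v assume "v \<in> pt ` set vs"
    then obtain X where X: "X \<in> set vs" "v = pt X" by blast
    have "{e \<in> edg ` set es. v \<in> e} = edg ` set (filter (\<lambda>e. fst e = X \<or> snd e = X) es)"
    proof
      show "{e \<in> edg ` set es. v \<in> e} \<subseteq> edg ` set (filter (\<lambda>e. fst e = X \<or> snd e = X) es)"
      proof
        fix E assume "E \<in> {e \<in> edg ` set es. v \<in> e}"
        then obtain e where e: "e \<in> set es" "E = edg e" "v \<in> edg e" by blast
        hence "pt X = pt (fst e) \<or> pt X = pt (snd e)" using X by (simp add: edg_def)
        hence "X = fst e \<or> X = snd e" using pt_inj by blast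
        then show "E \<in> edg ` set (filter (\<lambda>e. fst e = X \<or> snd e = X) es)" using e by auto
      qed
    next
      show "edg ` set (filter (\<lambda>e. fst e = X \<or> snd e = X) es) \<subseteq> {e \<in> edg ` set es. v \<in> e}"
        using X by (auto simp: edg_def)
    qed
    moreover have "card (edg ` set (filter (\<lambda>e. fst e = X \<or> snd e = X) es))
        = length (filter (\<lambda>e. fst e = X \<or> snd e = X) es)"
    proof -
      have i: "inj_on edg (set (filter (\<lambda>e. fst e = X \<or> snd e = X) es))"
        using injE by (rule inj_on_subset) auto
      have "card (edg ` set (filter (\<lambda>e. fst e = X \<or> snd e = X) es)) = card (set (filter (\<lambda>e. fst e = X \<or> snd e = X) es))"
        by (rule card_image[OF i])
      also have "\<dots> = length (filter (\<lambda>e. fst e = X \<or> snd e = X) es)"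
        by (rule distinct_card[OF distinct_filter[OF des]])
      finally show ?thesis .
    qed
    ultimately show "degree (edg ` set es) v = 4" using c4 X by (simp add: degree_def)
  qed
  show ?thesis unfolding four_regular_matchstick_graph_def matchstick_graph_def
    using edges cross degs cardV by simp
qed


definition g94_vs :: "zpt list" where
  "g94_vs = [((-38,0),(-24,0)),
    ((-35,-4),(-20,3)),
    ((-33,0),(-24,-5)),
    ((-32,-8),(-16,6)),
    ((-32,0),(-16,0)),
    ((-29,-12),(-12,9)),
    ((-29,-4),(-12,3)),
    ((-28,0),(-24,-10)),
    ((-28,0),(-24,0)),
    ((-26,-8),(-8,6)),
    ((-25,4),(-20,-13)),
    ((-24,-12),(-12,14)),
    ((-23,0),(-24,-5)),
    ((-22,0),(-16,-10)),
    ((-22,0),(-16,0)),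
    ((-22,8),(-16,-16)),
    ((-19,-12),(-12,9)),
    ((-19,-12),(-12,19)),
    ((-19,-4),(-12,3)),
    ((-19,4),(-12,-13)),
    ((-19,12),(-12,-19)),
    ((-17,0),(-16,-5)),
    ((-16,-8),(-8,6)),
    ((-16,-8),(-8,16)),
    ((-16,0),(-8,0)),
    ((-16,8),(-8,-16)),
    ((-14,-12),(-12,14)),
    ((-14,12),(-12,-14)),
    ((-13,-12),(-4,19)),
    ((-13,-4),(-4,3)),
    ((-11,-8),(-8,11)),
    ((-11,0),(-8,-5)),
    ((-11,8),(-8,-11)),
    ((-10,-8),(0,16)),
    ((-9,12),(-12,-19)),
    ((-8,-4),(-4,8)),
    ((-8,4),(-4,-8)),
    ((-7,-12),(4,19)),
    ((-6,0),(-8,0)),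
    ((-5,-8),(0,11)),
    ((-4,-8),(8,16)),
    ((-4,12),(-12,-14)),
    ((-3,-4),(-4,3)),
    ((-3,4),(-4,-3)),
    ((-2,-4),(4,8)),
    ((-1,-12),(12,19)),
    ((-1,8),(-8,-11)),
    ((1,-8),(8,11)),
    ((1,12),(-12,-19)),
    ((2,4),(-4,-8)),
    ((3,-4),(4,3)),
    ((3,4),(4,-3)),
    ((4,-12),(12,14)),
    ((4,8),(-8,-16)),
    ((5,8),(0,-11)),
    ((6,0),(8,0)),
    ((7,12),(-4,-19)),
    ((8,-4),(4,8)),
    ((8,4),(4,-8)),
    ((9,-12),(12,19)),
    ((10,8),(0,-16)),
    ((11,-8),(8,11)),
    ((11,0),(8,5)),
    ((11,8),(8,-11)),
    ((13,4),(4,-3)),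
    ((13,12),(4,-19)),
    ((14,-12),(12,14)),
    ((14,12),(12,-14)),
    ((16,-8),(8,16)),
    ((16,0),(8,0)),
    ((16,8),(8,-16)),
    ((16,8),(8,-6)),
    ((17,0),(16,5)),
    ((19,-12),(12,19)),
    ((19,-4),(12,13)),
    ((19,4),(12,-3)),
    ((19,12),(12,-19)),
    ((19,12),(12,-9)),
    ((22,-8),(16,16)),
    ((22,0),(16,0)),
    ((22,0),(16,10)),
    ((23,0),(24,5)),
    ((24,12),(12,-14)),
    ((25,-4),(20,13)),
    ((26,8),(8,-6)),
    ((28,0),(24,0)),
    ((28,0),(24,10)),
    ((29,4),(12,-3)),
    ((29,12),(12,-9)),
    ((32,0),(16,0)),
    ((32,8),(16,-6)),
    ((33,0),(24,5)),
    ((35,4),(20,-3)),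
    ((38,0),(24,0))]"

definition g94_es :: "(zpt \<times> zpt) list" where
  "g94_es = [(((-38,0),(-24,0)),((-35,-4),(-20,3))),
    (((-38,0),(-24,0)),((-33,0),(-24,-5))),
    (((-38,0),(-24,0)),((-32,0),(-16,0))),
    (((-38,0),(-24,0)),((-28,0),(-24,0))),
    (((-35,-4),(-20,3)),((-32,-8),(-16,6))),
    (((-35,-4),(-20,3)),((-32,0),(-16,0))),
    (((-35,-4),(-20,3)),((-29,-4),(-12,3))),
    (((-33,0),(-24,-5)),((-28,0),(-24,-10))),
    (((-33,0),(-24,-5)),((-28,0),(-24,0))),
    (((-33,0),(-24,-5)),((-23,0),(-24,-5))),
    (((-32,-8),(-16,6)),((-29,-12),(-12,9))),
    (((-32,-8),(-16,6)),((-29,-4),(-12,3))),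
    (((-32,-8),(-16,6)),((-26,-8),(-8,6))),
    (((-32,0),(-16,0)),((-29,-4),(-12,3))),
    (((-32,0),(-16,0)),((-22,0),(-16,0))),
    (((-29,-12),(-12,9)),((-26,-8),(-8,6))),
    (((-29,-12),(-12,9)),((-24,-12),(-12,14))),
    (((-29,-12),(-12,9)),((-19,-12),(-12,9))),
    (((-29,-4),(-12,3)),((-26,-8),(-8,6))),
    (((-28,0),(-24,-10)),((-25,4),(-20,-13))),
    (((-28,0),(-24,-10)),((-23,0),(-24,-5))),
    (((-28,0),(-24,-10)),((-22,0),(-16,-10))),
    (((-28,0),(-24,0)),((-23,0),(-24,-5))),
    (((-28,0),(-24,0)),((-22,0),(-16,0))),
    (((-26,-8),(-8,6)),((-16,-8),(-8,6))),
    (((-25,4),(-20,-13)),((-22,0),(-16,-10))),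
    (((-25,4),(-20,-13)),((-22,8),(-16,-16))),
    (((-25,4),(-20,-13)),((-19,4),(-12,-13))),
    (((-24,-12),(-12,14)),((-19,-12),(-12,9))),
    (((-24,-12),(-12,14)),((-19,-12),(-12,19))),
    (((-24,-12),(-12,14)),((-14,-12),(-12,14))),
    (((-23,0),(-24,-5)),((-17,0),(-16,-5))),
    (((-22,0),(-16,-10)),((-19,4),(-12,-13))),
    (((-22,0),(-16,-10)),((-17,0),(-16,-5))),
    (((-22,0),(-16,0)),((-19,-4),(-12,3))),
    (((-22,0),(-16,0)),((-17,0),(-16,-5))),
    (((-22,8),(-16,-16)),((-19,4),(-12,-13))),
    (((-22,8),(-16,-16)),((-19,12),(-12,-19))),
    (((-22,8),(-16,-16)),((-16,8),(-8,-16))),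
    (((-19,-12),(-12,9)),((-16,-8),(-8,6))),
    (((-19,-12),(-12,9)),((-14,-12),(-12,14))),
    (((-19,-12),(-12,19)),((-16,-8),(-8,16))),
    (((-19,-12),(-12,19)),((-14,-12),(-12,14))),
    (((-19,-12),(-12,19)),((-13,-12),(-4,19))),
    (((-19,-4),(-12,3)),((-16,-8),(-8,6))),
    (((-19,-4),(-12,3)),((-16,0),(-8,0))),
    (((-19,-4),(-12,3)),((-13,-4),(-4,3))),
    (((-19,4),(-12,-13)),((-16,8),(-8,-16))),
    (((-19,12),(-12,-19)),((-16,8),(-8,-16))),
    (((-19,12),(-12,-19)),((-14,12),(-12,-14))),
    (((-19,12),(-12,-19)),((-9,12),(-12,-19))),
    (((-17,0),(-16,-5)),((-11,0),(-8,-5))),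
    (((-16,-8),(-8,6)),((-11,-8),(-8,11))),
    (((-16,-8),(-8,16)),((-13,-12),(-4,19))),
    (((-16,-8),(-8,16)),((-11,-8),(-8,11))),
    (((-16,-8),(-8,16)),((-10,-8),(0,16))),
    (((-16,0),(-8,0)),((-13,-4),(-4,3))),
    (((-16,0),(-8,0)),((-11,0),(-8,-5))),
    (((-16,0),(-8,0)),((-6,0),(-8,0))),
    (((-16,8),(-8,-16)),((-11,8),(-8,-11))),
    (((-14,-12),(-12,14)),((-11,-8),(-8,11))),
    (((-14,12),(-12,-14)),((-11,8),(-8,-11))),
    (((-14,12),(-12,-14)),((-9,12),(-12,-19))),
    (((-14,12),(-12,-14)),((-4,12),(-12,-14))),
    (((-13,-12),(-4,19)),((-10,-8),(0,16))),
    (((-13,-12),(-4,19)),((-7,-12),(4,19))),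
    (((-13,-4),(-4,3)),((-8,-4),(-4,8))),
    (((-13,-4),(-4,3)),((-3,-4),(-4,3))),
    (((-11,-8),(-8,11)),((-5,-8),(0,11))),
    (((-11,0),(-8,-5)),((-8,4),(-4,-8))),
    (((-11,0),(-8,-5)),((-6,0),(-8,0))),
    (((-11,8),(-8,-11)),((-8,4),(-4,-8))),
    (((-11,8),(-8,-11)),((-1,8),(-8,-11))),
    (((-10,-8),(0,16)),((-7,-12),(4,19))),
    (((-10,-8),(0,16)),((-4,-8),(8,16))),
    (((-9,12),(-12,-19)),((-4,12),(-12,-14))),
    (((-9,12),(-12,-19)),((1,12),(-12,-19))),
    (((-8,-4),(-4,8)),((-5,-8),(0,11))),
    (((-8,-4),(-4,8)),((-3,-4),(-4,3))),
    (((-8,-4),(-4,8)),((-2,-4),(4,8))),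
    (((-8,4),(-4,-8)),((-3,4),(-4,-3))),
    (((-8,4),(-4,-8)),((2,4),(-4,-8))),
    (((-7,-12),(4,19)),((-4,-8),(8,16))),
    (((-7,-12),(4,19)),((-1,-12),(12,19))),
    (((-6,0),(-8,0)),((-3,-4),(-4,3))),
    (((-6,0),(-8,0)),((-3,4),(-4,-3))),
    (((-5,-8),(0,11)),((-2,-4),(4,8))),
    (((-5,-8),(0,11)),((1,-8),(8,11))),
    (((-4,-8),(8,16)),((-1,-12),(12,19))),
    (((-4,-8),(8,16)),((1,-8),(8,11))),
    (((-4,12),(-12,-14)),((-1,8),(-8,-11))),
    (((-4,12),(-12,-14)),((1,12),(-12,-19))),
    (((-3,-4),(-4,3)),((3,-4),(4,3))),
    (((-3,4),(-4,-3)),((2,4),(-4,-8))),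
    (((-3,4),(-4,-3)),((3,4),(4,-3))),
    (((-2,-4),(4,8)),((3,-4),(4,3))),
    (((-2,-4),(4,8)),((8,-4),(4,8))),
    (((-1,-12),(12,19)),((4,-12),(12,14))),
    (((-1,-12),(12,19)),((9,-12),(12,19))),
    (((-1,8),(-8,-11)),((4,8),(-8,-16))),
    (((-1,8),(-8,-11)),((5,8),(0,-11))),
    (((1,-8),(8,11)),((4,-12),(12,14))),
    (((1,-8),(8,11)),((11,-8),(8,11))),
    (((1,12),(-12,-19)),((4,8),(-8,-16))),
    (((1,12),(-12,-19)),((7,12),(-4,-19))),
    (((2,4),(-4,-8)),((5,8),(0,-11))),
    (((2,4),(-4,-8)),((8,4),(4,-8))),
    (((3,-4),(4,3)),((6,0),(8,0))),
    (((3,-4),(4,3)),((8,-4),(4,8))),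
    (((3,4),(4,-3)),((6,0),(8,0))),
    (((3,4),(4,-3)),((8,4),(4,-8))),
    (((3,4),(4,-3)),((13,4),(4,-3))),
    (((4,-12),(12,14)),((9,-12),(12,19))),
    (((4,-12),(12,14)),((14,-12),(12,14))),
    (((4,8),(-8,-16)),((7,12),(-4,-19))),
    (((4,8),(-8,-16)),((10,8),(0,-16))),
    (((5,8),(0,-11)),((8,4),(4,-8))),
    (((5,8),(0,-11)),((11,8),(8,-11))),
    (((6,0),(8,0)),((11,0),(8,5))),
    (((6,0),(8,0)),((16,0),(8,0))),
    (((7,12),(-4,-19)),((10,8),(0,-16))),
    (((7,12),(-4,-19)),((13,12),(4,-19))),
    (((8,-4),(4,8)),((11,-8),(8,11))),
    (((8,-4),(4,8)),((11,0),(8,5))),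
    (((8,4),(4,-8)),((13,4),(4,-3))),
    (((9,-12),(12,19)),((14,-12),(12,14))),
    (((9,-12),(12,19)),((19,-12),(12,19))),
    (((10,8),(0,-16)),((13,12),(4,-19))),
    (((10,8),(0,-16)),((16,8),(8,-16))),
    (((11,-8),(8,11)),((14,-12),(12,14))),
    (((11,-8),(8,11)),((16,-8),(8,16))),
    (((11,0),(8,5)),((16,0),(8,0))),
    (((11,0),(8,5)),((17,0),(16,5))),
    (((11,8),(8,-11)),((14,12),(12,-14))),
    (((11,8),(8,-11)),((16,8),(8,-16))),
    (((11,8),(8,-11)),((16,8),(8,-6))),
    (((13,4),(4,-3)),((16,0),(8,0))),
    (((13,4),(4,-3)),((19,4),(12,-3))),
    (((13,12),(4,-19)),((16,8),(8,-16))),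
    (((13,12),(4,-19)),((19,12),(12,-19))),
    (((14,-12),(12,14)),((19,-12),(12,19))),
    (((14,12),(12,-14)),((19,12),(12,-19))),
    (((14,12),(12,-14)),((19,12),(12,-9))),
    (((14,12),(12,-14)),((24,12),(12,-14))),
    (((16,-8),(8,16)),((19,-12),(12,19))),
    (((16,-8),(8,16)),((19,-4),(12,13))),
    (((16,-8),(8,16)),((22,-8),(16,16))),
    (((16,0),(8,0)),((19,4),(12,-3))),
    (((16,8),(8,-16)),((19,12),(12,-19))),
    (((16,8),(8,-6)),((19,4),(12,-3))),
    (((16,8),(8,-6)),((19,12),(12,-9))),
    (((16,8),(8,-6)),((26,8),(8,-6))),
    (((17,0),(16,5)),((22,0),(16,0))),
    (((17,0),(16,5)),((22,0),(16,10))),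
    (((17,0),(16,5)),((23,0),(24,5))),
    (((19,-12),(12,19)),((22,-8),(16,16))),
    (((19,-4),(12,13)),((22,-8),(16,16))),
    (((19,-4),(12,13)),((22,0),(16,10))),
    (((19,-4),(12,13)),((25,-4),(20,13))),
    (((19,4),(12,-3)),((22,0),(16,0))),
    (((19,12),(12,-19)),((24,12),(12,-14))),
    (((19,12),(12,-9)),((24,12),(12,-14))),
    (((19,12),(12,-9)),((29,12),(12,-9))),
    (((22,-8),(16,16)),((25,-4),(20,13))),
    (((22,0),(16,0)),((28,0),(24,0))),
    (((22,0),(16,0)),((32,0),(16,0))),
    (((22,0),(16,10)),((25,-4),(20,13))),
    (((22,0),(16,10)),((28,0),(24,10))),
    (((23,0),(24,5)),((28,0),(24,0))),
    (((23,0),(24,5)),((28,0),(24,10))),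
    (((23,0),(24,5)),((33,0),(24,5))),
    (((24,12),(12,-14)),((29,12),(12,-9))),
    (((25,-4),(20,13)),((28,0),(24,10))),
    (((26,8),(8,-6)),((29,4),(12,-3))),
    (((26,8),(8,-6)),((29,12),(12,-9))),
    (((26,8),(8,-6)),((32,8),(16,-6))),
    (((28,0),(24,0)),((33,0),(24,5))),
    (((28,0),(24,0)),((38,0),(24,0))),
    (((28,0),(24,10)),((33,0),(24,5))),
    (((29,4),(12,-3)),((32,0),(16,0))),
    (((29,4),(12,-3)),((32,8),(16,-6))),
    (((29,4),(12,-3)),((35,4),(20,-3))),
    (((29,12),(12,-9)),((32,8),(16,-6))),
    (((32,0),(16,0)),((35,4),(20,-3))),
    (((32,0),(16,0)),((38,0),(24,0))),
    (((32,8),(16,-6)),((35,4),(20,-3))),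
    (((33,0),(24,5)),((38,0),(24,0))),
    (((35,4),(20,-3)),((38,0),(24,0)))]"

lemma c94: "check g94_vs g94_es" by code_simp

lemma l94: "length g94_vs = 94" by (simp add: g94_vs_def)


definition g95_vs :: "zpt list" where
  "g95_vs = [((-38,0),(-24,0)),
    ((-35,-4),(-20,3)),
    ((-33,0),(-24,-5)),
    ((-32,-8),(-16,6)),
    ((-32,0),(-16,0)),
    ((-29,-12),(-12,9)),
    ((-29,-4),(-12,3)),
    ((-28,0),(-24,-10)),
    ((-28,0),(-24,0)),
    ((-26,-8),(-8,6)),
    ((-25,4),(-20,-13)),
    ((-24,-12),(-12,14)),
    ((-23,0),(-24,-5)),
    ((-22,0),(-16,-10)),
    ((-22,0),(-16,0)),
    ((-22,8),(-16,-16)),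
    ((-19,-12),(-12,9)),
    ((-19,-12),(-12,19)),
    ((-19,-4),(-12,3)),
    ((-19,4),(-12,-13)),
    ((-19,12),(-12,-19)),
    ((-17,0),(-16,-5)),
    ((-16,-8),(-8,6)),
    ((-16,-8),(-8,16)),
    ((-16,0),(-8,0)),
    ((-16,8),(-8,-16)),
    ((-14,-12),(-12,14)),
    ((-14,12),(-12,-14)),
    ((-13,-12),(-4,19)),
    ((-13,-4),(-4,3)),
    ((-11,-8),(-8,11)),
    ((-11,0),(-8,-5)),
    ((-11,8),(-8,-11)),
    ((-10,-8),(0,16)),
    ((-9,12),(-12,-19)),
    ((-8,-4),(-4,8)),
    ((-8,4),(-4,-8)),
    ((-7,-12),(4,19)),
    ((-6,0),(-8,0)),
    ((-5,-8),(0,11)),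
    ((-4,-8),(8,16)),
    ((-4,12),(-12,-14)),
    ((-3,-4),(-4,3)),
    ((-3,4),(-4,-3)),
    ((-2,-4),(4,8)),
    ((-1,-12),(12,19)),
    ((-1,8),(-8,-11)),
    ((0,0),(0,0)),
    ((1,-8),(8,11)),
    ((1,12),(-12,-19)),
    ((2,4),(-4,-8)),
    ((3,-4),(4,3)),
    ((3,4),(4,-3)),
    ((4,-12),(12,14)),
    ((4,8),(-8,-16)),
    ((5,8),(0,-11)),
    ((6,0),(8,0)),
    ((7,12),(-4,-19)),
    ((8,-4),(4,8)),
    ((8,4),(4,-8)),
    ((9,-12),(12,19)),
    ((10,8),(0,-16)),
    ((11,-8),(8,11)),
    ((11,0),(8,5)),
    ((11,8),(8,-11)),
    ((13,4),(4,-3)),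
    ((13,12),(4,-19)),
    ((14,-12),(12,14)),
    ((14,12),(12,-14)),
    ((16,-8),(8,16)),
    ((16,0),(8,0)),
    ((16,8),(8,-16)),
    ((16,8),(8,-6)),
    ((17,0),(16,5)),
    ((19,-12),(12,19)),
    ((19,-4),(12,13)),
    ((19,4),(12,-3)),
    ((19,12),(12,-19)),
    ((19,12),(12,-9)),
    ((22,-8),(16,16)),
    ((22,0),(16,0)),
    ((22,0),(16,10)),
    ((23,0),(24,5)),
    ((24,12),(12,-14)),
    ((25,-4),(20,13)),
    ((26,8),(8,-6)),
    ((28,0),(24,0)),
    ((28,0),(24,10)),
    ((29,4),(12,-3)),
    ((29,12),(12,-9)),
    ((32,0),(16,0)),
    ((32,8),(16,-6)),
    ((33,0),(24,5)),
    ((35,4),(20,-3)),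
    ((38,0),(24,0))]"

definition g95_es :: "(zpt \<times> zpt) list" where
  "g95_es = [(((-38,0),(-24,0)),((-35,-4),(-20,3))),
    (((-38,0),(-24,0)),((-33,0),(-24,-5))),
    (((-38,0),(-24,0)),((-32,0),(-16,0))),
    (((-38,0),(-24,0)),((-28,0),(-24,0))),
    (((-35,-4),(-20,3)),((-32,-8),(-16,6))),
    (((-35,-4),(-20,3)),((-32,0),(-16,0))),
    (((-35,-4),(-20,3)),((-29,-4),(-12,3))),
    (((-33,0),(-24,-5)),((-28,0),(-24,-10))),
    (((-33,0),(-24,-5)),((-28,0),(-24,0))),
    (((-33,0),(-24,-5)),((-23,0),(-24,-5))),
    (((-32,-8),(-16,6)),((-29,-12),(-12,9))),
    (((-32,-8),(-16,6)),((-29,-4),(-12,3))),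
    (((-32,-8),(-16,6)),((-26,-8),(-8,6))),
    (((-32,0),(-16,0)),((-29,-4),(-12,3))),
    (((-32,0),(-16,0)),((-22,0),(-16,0))),
    (((-29,-12),(-12,9)),((-26,-8),(-8,6))),
    (((-29,-12),(-12,9)),((-24,-12),(-12,14))),
    (((-29,-12),(-12,9)),((-19,-12),(-12,9))),
    (((-29,-4),(-12,3)),((-26,-8),(-8,6))),
    (((-28,0),(-24,-10)),((-25,4),(-20,-13))),
    (((-28,0),(-24,-10)),((-23,0),(-24,-5))),
    (((-28,0),(-24,-10)),((-22,0),(-16,-10))),
    (((-28,0),(-24,0)),((-23,0),(-24,-5))),
    (((-28,0),(-24,0)),((-22,0),(-16,0))),
    (((-26,-8),(-8,6)),((-16,-8),(-8,6))),
    (((-25,4),(-20,-13)),((-22,0),(-16,-10))),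
    (((-25,4),(-20,-13)),((-22,8),(-16,-16))),
    (((-25,4),(-20,-13)),((-19,4),(-12,-13))),
    (((-24,-12),(-12,14)),((-19,-12),(-12,9))),
    (((-24,-12),(-12,14)),((-19,-12),(-12,19))),
    (((-24,-12),(-12,14)),((-14,-12),(-12,14))),
    (((-23,0),(-24,-5)),((-17,0),(-16,-5))),
    (((-22,0),(-16,-10)),((-19,4),(-12,-13))),
    (((-22,0),(-16,-10)),((-17,0),(-16,-5))),
    (((-22,0),(-16,0)),((-19,-4),(-12,3))),
    (((-22,0),(-16,0)),((-17,0),(-16,-5))),
    (((-22,8),(-16,-16)),((-19,4),(-12,-13))),
    (((-22,8),(-16,-16)),((-19,12),(-12,-19))),
    (((-22,8),(-16,-16)),((-16,8),(-8,-16))),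
    (((-19,-12),(-12,9)),((-16,-8),(-8,6))),
    (((-19,-12),(-12,9)),((-14,-12),(-12,14))),
    (((-19,-12),(-12,19)),((-16,-8),(-8,16))),
    (((-19,-12),(-12,19)),((-14,-12),(-12,14))),
    (((-19,-12),(-12,19)),((-13,-12),(-4,19))),
    (((-19,-4),(-12,3)),((-16,-8),(-8,6))),
    (((-19,-4),(-12,3)),((-16,0),(-8,0))),
    (((-19,-4),(-12,3)),((-13,-4),(-4,3))),
    (((-19,4),(-12,-13)),((-16,8),(-8,-16))),
    (((-19,12),(-12,-19)),((-16,8),(-8,-16))),
    (((-19,12),(-12,-19)),((-14,12),(-12,-14))),
    (((-19,12),(-12,-19)),((-9,12),(-12,-19))),
    (((-17,0),(-16,-5)),((-11,0),(-8,-5))),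
    (((-16,-8),(-8,6)),((-11,-8),(-8,11))),
    (((-16,-8),(-8,16)),((-13,-12),(-4,19))),
    (((-16,-8),(-8,16)),((-11,-8),(-8,11))),
    (((-16,-8),(-8,16)),((-10,-8),(0,16))),
    (((-16,0),(-8,0)),((-13,-4),(-4,3))),
    (((-16,0),(-8,0)),((-11,0),(-8,-5))),
    (((-16,0),(-8,0)),((-6,0),(-8,0))),
    (((-16,8),(-8,-16)),((-11,8),(-8,-11))),
    (((-14,-12),(-12,14)),((-11,-8),(-8,11))),
    (((-14,12),(-12,-14)),((-11,8),(-8,-11))),
    (((-14,12),(-12,-14)),((-9,12),(-12,-19))),
    (((-14,12),(-12,-14)),((-4,12),(-12,-14))),
    (((-13,-12),(-4,19)),((-10,-8),(0,16))),
    (((-13,-12),(-4,19)),((-7,-12),(4,19))),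
    (((-13,-4),(-4,3)),((-8,-4),(-4,8))),
    (((-13,-4),(-4,3)),((-3,-4),(-4,3))),
    (((-11,-8),(-8,11)),((-5,-8),(0,11))),
    (((-11,0),(-8,-5)),((-8,4),(-4,-8))),
    (((-11,0),(-8,-5)),((-6,0),(-8,0))),
    (((-11,8),(-8,-11)),((-8,4),(-4,-8))),
    (((-11,8),(-8,-11)),((-1,8),(-8,-11))),
    (((-10,-8),(0,16)),((-7,-12),(4,19))),
    (((-10,-8),(0,16)),((-4,-8),(8,16))),
    (((-9,12),(-12,-19)),((-4,12),(-12,-14))),
    (((-9,12),(-12,-19)),((1,12),(-12,-19))),
    (((-8,-4),(-4,8)),((-5,-8),(0,11))),
    (((-8,-4),(-4,8)),((-3,-4),(-4,3))),
    (((-8,-4),(-4,8)),((-2,-4),(4,8))),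
    (((-8,4),(-4,-8)),((-3,4),(-4,-3))),
    (((-8,4),(-4,-8)),((2,4),(-4,-8))),
    (((-7,-12),(4,19)),((-4,-8),(8,16))),
    (((-7,-12),(4,19)),((-1,-12),(12,19))),
    (((-6,0),(-8,0)),((-3,-4),(-4,3))),
    (((-6,0),(-8,0)),((0,0),(0,0))),
    (((-5,-8),(0,11)),((-2,-4),(4,8))),
    (((-5,-8),(0,11)),((1,-8),(8,11))),
    (((-4,-8),(8,16)),((-1,-12),(12,19))),
    (((-4,-8),(8,16)),((1,-8),(8,11))),
    (((-4,12),(-12,-14)),((-1,8),(-8,-11))),
    (((-4,12),(-12,-14)),((1,12),(-12,-19))),
    (((-3,-4),(-4,3)),((3,-4),(4,3))),
    (((-3,4),(-4,-3)),((0,0),(0,0))),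
    (((-3,4),(-4,-3)),((2,4),(-4,-8))),
    (((-3,4),(-4,-3)),((3,4),(4,-3))),
    (((-2,-4),(4,8)),((3,-4),(4,3))),
    (((-2,-4),(4,8)),((8,-4),(4,8))),
    (((-1,-12),(12,19)),((4,-12),(12,14))),
    (((-1,-12),(12,19)),((9,-12),(12,19))),
    (((-1,8),(-8,-11)),((4,8),(-8,-16))),
    (((-1,8),(-8,-11)),((5,8),(0,-11))),
    (((0,0),(0,0)),((3,-4),(4,3))),
    (((0,0),(0,0)),((6,0),(8,0))),
    (((1,-8),(8,11)),((4,-12),(12,14))),
    (((1,-8),(8,11)),((11,-8),(8,11))),
    (((1,12),(-12,-19)),((4,8),(-8,-16))),
    (((1,12),(-12,-19)),((7,12),(-4,-19))),
    (((2,4),(-4,-8)),((5,8),(0,-11))),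
    (((2,4),(-4,-8)),((8,4),(4,-8))),
    (((3,-4),(4,3)),((8,-4),(4,8))),
    (((3,4),(4,-3)),((6,0),(8,0))),
    (((3,4),(4,-3)),((8,4),(4,-8))),
    (((3,4),(4,-3)),((13,4),(4,-3))),
    (((4,-12),(12,14)),((9,-12),(12,19))),
    (((4,-12),(12,14)),((14,-12),(12,14))),
    (((4,8),(-8,-16)),((7,12),(-4,-19))),
    (((4,8),(-8,-16)),((10,8),(0,-16))),
    (((5,8),(0,-11)),((8,4),(4,-8))),
    (((5,8),(0,-11)),((11,8),(8,-11))),
    (((6,0),(8,0)),((11,0),(8,5))),
    (((6,0),(8,0)),((16,0),(8,0))),
    (((7,12),(-4,-19)),((10,8),(0,-16))),
    (((7,12),(-4,-19)),((13,12),(4,-19))),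
    (((8,-4),(4,8)),((11,-8),(8,11))),
    (((8,-4),(4,8)),((11,0),(8,5))),
    (((8,4),(4,-8)),((13,4),(4,-3))),
    (((9,-12),(12,19)),((14,-12),(12,14))),
    (((9,-12),(12,19)),((19,-12),(12,19))),
    (((10,8),(0,-16)),((13,12),(4,-19))),
    (((10,8),(0,-16)),((16,8),(8,-16))),
    (((11,-8),(8,11)),((14,-12),(12,14))),
    (((11,-8),(8,11)),((16,-8),(8,16))),
    (((11,0),(8,5)),((16,0),(8,0))),
    (((11,0),(8,5)),((17,0),(16,5))),
    (((11,8),(8,-11)),((14,12),(12,-14))),
    (((11,8),(8,-11)),((16,8),(8,-16))),
    (((11,8),(8,-11)),((16,8),(8,-6))),
    (((13,4),(4,-3)),((16,0),(8,0))),
    (((13,4),(4,-3)),((19,4),(12,-3))),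
    (((13,12),(4,-19)),((16,8),(8,-16))),
    (((13,12),(4,-19)),((19,12),(12,-19))),
    (((14,-12),(12,14)),((19,-12),(12,19))),
    (((14,12),(12,-14)),((19,12),(12,-19))),
    (((14,12),(12,-14)),((19,12),(12,-9))),
    (((14,12),(12,-14)),((24,12),(12,-14))),
    (((16,-8),(8,16)),((19,-12),(12,19))),
    (((16,-8),(8,16)),((19,-4),(12,13))),
    (((16,-8),(8,16)),((22,-8),(16,16))),
    (((16,0),(8,0)),((19,4),(12,-3))),
    (((16,8),(8,-16)),((19,12),(12,-19))),
    (((16,8),(8,-6)),((19,4),(12,-3))),
    (((16,8),(8,-6)),((19,12),(12,-9))),
    (((16,8),(8,-6)),((26,8),(8,-6))),
    (((17,0),(16,5)),((22,0),(16,0))),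
    (((17,0),(16,5)),((22,0),(16,10))),
    (((17,0),(16,5)),((23,0),(24,5))),
    (((19,-12),(12,19)),((22,-8),(16,16))),
    (((19,-4),(12,13)),((22,-8),(16,16))),
    (((19,-4),(12,13)),((22,0),(16,10))),
    (((19,-4),(12,13)),((25,-4),(20,13))),
    (((19,4),(12,-3)),((22,0),(16,0))),
    (((19,12),(12,-19)),((24,12),(12,-14))),
    (((19,12),(12,-9)),((24,12),(12,-14))),
    (((19,12),(12,-9)),((29,12),(12,-9))),
    (((22,-8),(16,16)),((25,-4),(20,13))),
    (((22,0),(16,0)),((28,0),(24,0))),
    (((22,0),(16,0)),((32,0),(16,0))),
    (((22,0),(16,10)),((25,-4),(20,13))),
    (((22,0),(16,10)),((28,0),(24,10))),
    (((23,0),(24,5)),((28,0),(24,0))),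
    (((23,0),(24,5)),((28,0),(24,10))),
    (((23,0),(24,5)),((33,0),(24,5))),
    (((24,12),(12,-14)),((29,12),(12,-9))),
    (((25,-4),(20,13)),((28,0),(24,10))),
    (((26,8),(8,-6)),((29,4),(12,-3))),
    (((26,8),(8,-6)),((29,12),(12,-9))),
    (((26,8),(8,-6)),((32,8),(16,-6))),
    (((28,0),(24,0)),((33,0),(24,5))),
    (((28,0),(24,0)),((38,0),(24,0))),
    (((28,0),(24,10)),((33,0),(24,5))),
    (((29,4),(12,-3)),((32,0),(16,0))),
    (((29,4),(12,-3)),((32,8),(16,-6))),
    (((29,4),(12,-3)),((35,4),(20,-3))),
    (((29,12),(12,-9)),((32,8),(16,-6))),
    (((32,0),(16,0)),((35,4),(20,-3))),
    (((32,0),(16,0)),((38,0),(24,0))),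
    (((32,8),(16,-6)),((35,4),(20,-3))),
    (((33,0),(24,5)),((38,0),(24,0))),
    (((35,4),(20,-3)),((38,0),(24,0)))]"

lemma c95: "check g95_vs g95_es" by code_simp

lemma l95: "length g95_vs = 95" by (simp add: g95_vs_def)


definition g96_vs :: "zpt list" where
  "g96_vs = [((-44,0),(-18,0)),
    ((-40,-3),(-15,4)),
    ((-39,0),(-18,-5)),
    ((-36,-6),(-12,8)),
    ((-36,0),(-12,0)),
    ((-34,0),(-18,-10)),
    ((-34,0),(-18,0)),
    ((-32,-9),(-9,12)),
    ((-32,-3),(-9,4)),
    ((-30,3),(-15,-14)),
    ((-29,0),(-18,-5)),
    ((-28,-6),(-6,8)),
    ((-27,-9),(-9,17)),
    ((-26,0),(-12,-10)),
    ((-26,0),(-12,0)),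
    ((-26,6),(-12,-18)),
    ((-22,-9),(-9,12)),
    ((-22,-9),(-9,22)),
    ((-22,-3),(-9,4)),
    ((-22,3),(-9,-14)),
    ((-22,9),(-9,-22)),
    ((-21,0),(-12,-5)),
    ((-18,-6),(-6,8)),
    ((-18,-6),(-6,18)),
    ((-18,0),(-6,0)),
    ((-18,6),(-6,-18)),
    ((-17,-9),(-9,17)),
    ((-17,3),(-9,-9)),
    ((-17,9),(-9,-17)),
    ((-14,-9),(-3,22)),
    ((-14,-3),(-3,4)),
    ((-13,-6),(-6,13)),
    ((-13,0),(-6,-5)),
    ((-13,6),(-6,-13)),
    ((-12,9),(-9,-22)),
    ((-10,-6),(0,18)),
    ((-9,-3),(-3,9)),
    ((-9,3),(-3,-9)),
    ((-8,0),(-6,0)),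
    ((-7,9),(-9,-17)),
    ((-6,-9),(3,22)),
    ((-5,-6),(0,13)),
    ((-4,-3),(-3,4)),
    ((-4,3),(-3,-4)),
    ((-3,6),(-6,-13)),
    ((-2,-6),(6,18)),
    ((-2,9),(-9,-22)),
    ((-1,-3),(3,9)),
    ((1,3),(-3,-9)),
    ((2,-9),(9,22)),
    ((2,6),(-6,-18)),
    ((3,-6),(6,13)),
    ((4,-3),(3,4)),
    ((4,3),(3,-4)),
    ((5,6),(0,-13)),
    ((6,9),(-3,-22)),
    ((7,-9),(9,17)),
    ((8,0),(6,0)),
    ((9,-3),(3,9)),
    ((9,3),(3,-9)),
    ((10,6),(0,-18)),
    ((12,-9),(9,22)),
    ((13,-6),(6,13)),
    ((13,0),(6,5)),
    ((13,6),(6,-13)),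
    ((14,3),(3,-4)),
    ((14,9),(3,-22)),
    ((17,-9),(9,17)),
    ((17,-3),(9,9)),
    ((17,9),(9,-17)),
    ((18,-6),(6,18)),
    ((18,0),(6,0)),
    ((18,6),(6,-18)),
    ((18,6),(6,-8)),
    ((21,0),(12,5)),
    ((22,-9),(9,22)),
    ((22,-3),(9,14)),
    ((22,3),(9,-4)),
    ((22,9),(9,-22)),
    ((22,9),(9,-12)),
    ((26,-6),(12,18)),
    ((26,0),(12,0)),
    ((26,0),(12,10)),
    ((27,9),(9,-17)),
    ((28,6),(6,-8)),
    ((29,0),(18,5)),
    ((30,-3),(15,14)),
    ((32,3),(9,-4)),
    ((32,9),(9,-12)),
    ((34,0),(18,0)),
    ((34,0),(18,10)),
    ((36,0),(12,0)),
    ((36,6),(12,-8)),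
    ((39,0),(18,5)),
    ((40,3),(15,-4)),
    ((44,0),(18,0))]"

definition g96_es :: "(zpt \<times> zpt) list" where
  "g96_es = [(((-44,0),(-18,0)),((-40,-3),(-15,4))),
    (((-44,0),(-18,0)),((-39,0),(-18,-5))),
    (((-44,0),(-18,0)),((-36,0),(-12,0))),
    (((-44,0),(-18,0)),((-34,0),(-18,0))),
    (((-40,-3),(-15,4)),((-36,-6),(-12,8))),
    (((-40,-3),(-15,4)),((-36,0),(-12,0))),
    (((-40,-3),(-15,4)),((-32,-3),(-9,4))),
    (((-39,0),(-18,-5)),((-34,0),(-18,-10))),
    (((-39,0),(-18,-5)),((-34,0),(-18,0))),
    (((-39,0),(-18,-5)),((-29,0),(-18,-5))),
    (((-36,-6),(-12,8)),((-32,-9),(-9,12))),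
    (((-36,-6),(-12,8)),((-32,-3),(-9,4))),
    (((-36,-6),(-12,8)),((-28,-6),(-6,8))),
    (((-36,0),(-12,0)),((-32,-3),(-9,4))),
    (((-36,0),(-12,0)),((-26,0),(-12,0))),
    (((-34,0),(-18,-10)),((-30,3),(-15,-14))),
    (((-34,0),(-18,-10)),((-29,0),(-18,-5))),
    (((-34,0),(-18,-10)),((-26,0),(-12,-10))),
    (((-34,0),(-18,0)),((-29,0),(-18,-5))),
    (((-34,0),(-18,0)),((-26,0),(-12,0))),
    (((-32,-9),(-9,12)),((-28,-6),(-6,8))),
    (((-32,-9),(-9,12)),((-27,-9),(-9,17))),
    (((-32,-9),(-9,12)),((-22,-9),(-9,12))),
    (((-32,-3),(-9,4)),((-28,-6),(-6,8))),
    (((-30,3),(-15,-14)),((-26,0),(-12,-10))),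
    (((-30,3),(-15,-14)),((-26,6),(-12,-18))),
    (((-30,3),(-15,-14)),((-22,3),(-9,-14))),
    (((-29,0),(-18,-5)),((-21,0),(-12,-5))),
    (((-28,-6),(-6,8)),((-18,-6),(-6,8))),
    (((-27,-9),(-9,17)),((-22,-9),(-9,12))),
    (((-27,-9),(-9,17)),((-22,-9),(-9,22))),
    (((-27,-9),(-9,17)),((-17,-9),(-9,17))),
    (((-26,0),(-12,-10)),((-22,3),(-9,-14))),
    (((-26,0),(-12,-10)),((-21,0),(-12,-5))),
    (((-26,0),(-12,0)),((-22,-3),(-9,4))),
    (((-26,0),(-12,0)),((-21,0),(-12,-5))),
    (((-26,6),(-12,-18)),((-22,3),(-9,-14))),
    (((-26,6),(-12,-18)),((-22,9),(-9,-22))),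
    (((-26,6),(-12,-18)),((-18,6),(-6,-18))),
    (((-22,-9),(-9,12)),((-18,-6),(-6,8))),
    (((-22,-9),(-9,12)),((-17,-9),(-9,17))),
    (((-22,-9),(-9,22)),((-18,-6),(-6,18))),
    (((-22,-9),(-9,22)),((-17,-9),(-9,17))),
    (((-22,-9),(-9,22)),((-14,-9),(-3,22))),
    (((-22,-3),(-9,4)),((-18,-6),(-6,8))),
    (((-22,-3),(-9,4)),((-18,0),(-6,0))),
    (((-22,-3),(-9,4)),((-14,-3),(-3,4))),
    (((-22,3),(-9,-14)),((-18,6),(-6,-18))),
    (((-22,9),(-9,-22)),((-18,6),(-6,-18))),
    (((-22,9),(-9,-22)),((-17,9),(-9,-17))),
    (((-22,9),(-9,-22)),((-12,9),(-9,-22))),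
    (((-21,0),(-12,-5)),((-17,3),(-9,-9))),
    (((-18,-6),(-6,8)),((-13,-6),(-6,13))),
    (((-18,-6),(-6,18)),((-14,-9),(-3,22))),
    (((-18,-6),(-6,18)),((-13,-6),(-6,13))),
    (((-18,-6),(-6,18)),((-10,-6),(0,18))),
    (((-18,0),(-6,0)),((-14,-3),(-3,4))),
    (((-18,0),(-6,0)),((-13,0),(-6,-5))),
    (((-18,0),(-6,0)),((-8,0),(-6,0))),
    (((-18,6),(-6,-18)),((-13,6),(-6,-13))),
    (((-17,-9),(-9,17)),((-13,-6),(-6,13))),
    (((-17,3),(-9,-9)),((-13,0),(-6,-5))),
    (((-17,3),(-9,-9)),((-13,6),(-6,-13))),
    (((-17,3),(-9,-9)),((-9,3),(-3,-9))),
    (((-17,9),(-9,-17)),((-13,6),(-6,-13))),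
    (((-17,9),(-9,-17)),((-12,9),(-9,-22))),
    (((-17,9),(-9,-17)),((-7,9),(-9,-17))),
    (((-14,-9),(-3,22)),((-10,-6),(0,18))),
    (((-14,-9),(-3,22)),((-6,-9),(3,22))),
    (((-14,-3),(-3,4)),((-9,-3),(-3,9))),
    (((-14,-3),(-3,4)),((-4,-3),(-3,4))),
    (((-13,-6),(-6,13)),((-5,-6),(0,13))),
    (((-13,0),(-6,-5)),((-9,3),(-3,-9))),
    (((-13,0),(-6,-5)),((-8,0),(-6,0))),
    (((-13,6),(-6,-13)),((-3,6),(-6,-13))),
    (((-12,9),(-9,-22)),((-7,9),(-9,-17))),
    (((-12,9),(-9,-22)),((-2,9),(-9,-22))),
    (((-10,-6),(0,18)),((-6,-9),(3,22))),
    (((-10,-6),(0,18)),((-2,-6),(6,18))),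
    (((-9,-3),(-3,9)),((-5,-6),(0,13))),
    (((-9,-3),(-3,9)),((-4,-3),(-3,4))),
    (((-9,-3),(-3,9)),((-1,-3),(3,9))),
    (((-9,3),(-3,-9)),((-4,3),(-3,-4))),
    (((-9,3),(-3,-9)),((1,3),(-3,-9))),
    (((-8,0),(-6,0)),((-4,-3),(-3,4))),
    (((-8,0),(-6,0)),((-4,3),(-3,-4))),
    (((-7,9),(-9,-17)),((-3,6),(-6,-13))),
    (((-7,9),(-9,-17)),((-2,9),(-9,-22))),
    (((-6,-9),(3,22)),((-2,-6),(6,18))),
    (((-6,-9),(3,22)),((2,-9),(9,22))),
    (((-5,-6),(0,13)),((-1,-3),(3,9))),
    (((-5,-6),(0,13)),((3,-6),(6,13))),
    (((-4,-3),(-3,4)),((4,-3),(3,4))),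
    (((-4,3),(-3,-4)),((1,3),(-3,-9))),
    (((-4,3),(-3,-4)),((4,3),(3,-4))),
    (((-3,6),(-6,-13)),((2,6),(-6,-18))),
    (((-3,6),(-6,-13)),((5,6),(0,-13))),
    (((-2,-6),(6,18)),((2,-9),(9,22))),
    (((-2,-6),(6,18)),((3,-6),(6,13))),
    (((-2,9),(-9,-22)),((2,6),(-6,-18))),
    (((-2,9),(-9,-22)),((6,9),(-3,-22))),
    (((-1,-3),(3,9)),((4,-3),(3,4))),
    (((-1,-3),(3,9)),((9,-3),(3,9))),
    (((1,3),(-3,-9)),((5,6),(0,-13))),
    (((1,3),(-3,-9)),((9,3),(3,-9))),
    (((2,-9),(9,22)),((7,-9),(9,17))),
    (((2,-9),(9,22)),((12,-9),(9,22))),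
    (((2,6),(-6,-18)),((6,9),(-3,-22))),
    (((2,6),(-6,-18)),((10,6),(0,-18))),
    (((3,-6),(6,13)),((7,-9),(9,17))),
    (((3,-6),(6,13)),((13,-6),(6,13))),
    (((4,-3),(3,4)),((8,0),(6,0))),
    (((4,-3),(3,4)),((9,-3),(3,9))),
    (((4,3),(3,-4)),((8,0),(6,0))),
    (((4,3),(3,-4)),((9,3),(3,-9))),
    (((4,3),(3,-4)),((14,3),(3,-4))),
    (((5,6),(0,-13)),((9,3),(3,-9))),
    (((5,6),(0,-13)),((13,6),(6,-13))),
    (((6,9),(-3,-22)),((10,6),(0,-18))),
    (((6,9),(-3,-22)),((14,9),(3,-22))),
    (((7,-9),(9,17)),((12,-9),(9,22))),
    (((7,-9),(9,17)),((17,-9),(9,17))),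
    (((8,0),(6,0)),((13,0),(6,5))),
    (((8,0),(6,0)),((18,0),(6,0))),
    (((9,-3),(3,9)),((13,0),(6,5))),
    (((9,-3),(3,9)),((17,-3),(9,9))),
    (((9,3),(3,-9)),((14,3),(3,-4))),
    (((10,6),(0,-18)),((14,9),(3,-22))),
    (((10,6),(0,-18)),((18,6),(6,-18))),
    (((12,-9),(9,22)),((17,-9),(9,17))),
    (((12,-9),(9,22)),((22,-9),(9,22))),
    (((13,-6),(6,13)),((17,-9),(9,17))),
    (((13,-6),(6,13)),((17,-3),(9,9))),
    (((13,-6),(6,13)),((18,-6),(6,18))),
    (((13,0),(6,5)),((17,-3),(9,9))),
    (((13,0),(6,5)),((18,0),(6,0))),
    (((13,6),(6,-13)),((17,9),(9,-17))),
    (((13,6),(6,-13)),((18,6),(6,-18))),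
    (((13,6),(6,-13)),((18,6),(6,-8))),
    (((14,3),(3,-4)),((18,0),(6,0))),
    (((14,3),(3,-4)),((22,3),(9,-4))),
    (((14,9),(3,-22)),((18,6),(6,-18))),
    (((14,9),(3,-22)),((22,9),(9,-22))),
    (((17,-9),(9,17)),((22,-9),(9,22))),
    (((17,-3),(9,9)),((21,0),(12,5))),
    (((17,9),(9,-17)),((22,9),(9,-22))),
    (((17,9),(9,-17)),((22,9),(9,-12))),
    (((17,9),(9,-17)),((27,9),(9,-17))),
    (((18,-6),(6,18)),((22,-9),(9,22))),
    (((18,-6),(6,18)),((22,-3),(9,14))),
    (((18,-6),(6,18)),((26,-6),(12,18))),
    (((18,0),(6,0)),((22,3),(9,-4))),
    (((18,6),(6,-18)),((22,9),(9,-22))),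
    (((18,6),(6,-8)),((22,3),(9,-4))),
    (((18,6),(6,-8)),((22,9),(9,-12))),
    (((18,6),(6,-8)),((28,6),(6,-8))),
    (((21,0),(12,5)),((26,0),(12,0))),
    (((21,0),(12,5)),((26,0),(12,10))),
    (((21,0),(12,5)),((29,0),(18,5))),
    (((22,-9),(9,22)),((26,-6),(12,18))),
    (((22,-3),(9,14)),((26,-6),(12,18))),
    (((22,-3),(9,14)),((26,0),(12,10))),
    (((22,-3),(9,14)),((30,-3),(15,14))),
    (((22,3),(9,-4)),((26,0),(12,0))),
    (((22,9),(9,-22)),((27,9),(9,-17))),
    (((22,9),(9,-12)),((27,9),(9,-17))),
    (((22,9),(9,-12)),((32,9),(9,-12))),
    (((26,-6),(12,18)),((30,-3),(15,14))),
    (((26,0),(12,0)),((34,0),(18,0))),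
    (((26,0),(12,0)),((36,0),(12,0))),
    (((26,0),(12,10)),((30,-3),(15,14))),
    (((26,0),(12,10)),((34,0),(18,10))),
    (((27,9),(9,-17)),((32,9),(9,-12))),
    (((28,6),(6,-8)),((32,3),(9,-4))),
    (((28,6),(6,-8)),((32,9),(9,-12))),
    (((28,6),(6,-8)),((36,6),(12,-8))),
    (((29,0),(18,5)),((34,0),(18,0))),
    (((29,0),(18,5)),((34,0),(18,10))),
    (((29,0),(18,5)),((39,0),(18,5))),
    (((30,-3),(15,14)),((34,0),(18,10))),
    (((32,3),(9,-4)),((36,0),(12,0))),
    (((32,3),(9,-4)),((36,6),(12,-8))),
    (((32,3),(9,-4)),((40,3),(15,-4))),
    (((32,9),(9,-12)),((36,6),(12,-8))),
    (((34,0),(18,0)),((39,0),(18,5))),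
    (((34,0),(18,0)),((44,0),(18,0))),
    (((34,0),(18,10)),((39,0),(18,5))),
    (((36,0),(12,0)),((40,3),(15,-4))),
    (((36,0),(12,0)),((44,0),(18,0))),
    (((36,6),(12,-8)),((40,3),(15,-4))),
    (((39,0),(18,5)),((44,0),(18,0))),
    (((40,3),(15,-4)),((44,0),(18,0)))]"

lemma c96: "check g96_vs g96_es" by code_simp

lemma l96: "length g96_vs = 96" by (simp add: g96_vs_def)


lemma ex_graph: assumes "check vs es" "length vs = n"
  shows "\<exists>V E. four_regular_matchstick_graph V E \<and> card V = n"
  using check_sound[OF assms(1)] assms(2) by blast

theorem theorem5p1:
  fixes n :: nat
  assumes "n \<in> {94, 95, 96}"
  shows "\<exists>V E. four_regular_matchstick_graph V E \<and> card V = n"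
proof -
  from assms consider "n = 94" | "n = 95" | "n = 96" by auto
  then show ?thesis
  proof cases
    case 1 then show ?thesis using ex_graph[OF c94 l94] by simp
  next
    case 2 then show ?thesis using ex_graph[OF c95 l95] by simp
  next
    case 3 then show ?thesis using ex_graph[OF c96 l96] by simp
  qed
qed

end
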